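(* Let $P : E \to B$ be a functor between finite categories which is both fibered in groupoids and cofibered in groupoids, and suppose $B$ is connected. Let $F = P^{-1}(b)$ be the fiber category over an object $b$ of $B$ (all fibers are equivalent, so the choice of $b$ does not matter). If $E$ and $B$ have Euler characteristics, then $F$ has Euler characteristic and \[ \chi(E) = \chi(B)\,\chi(F). \]
   Context: Matrices and Euler characteristic: for finite sets $I,J$ and $\zeta : I\times J \to \mathbb{Q}$, a weighting is $k^{\bullet} : J \to \mathbb{Q}$ with $\sum_j \zeta(i,j)k^j = 1$ for all $i$; a coweighting is $k_{\bullet} : I\to\mathbb{Q}$ with $\sum_i k_i\zeta(i,j)=1$ for all $j$. $\zeta$ has Euler characteristic if it has both, and then $|\zeta| = \sum_j k^j = \sum_i k_i$ (independent of choices). A finite category $A$ (finitely many objects and morphisms) has similarity matrix $\zeta_A(x,y) = \#A(x,y)$ on $\mathrm{ob}(A)\times \mathrm{ob}(A)$; $A$ has Euler characteristic if $\zeta_A$ does, and $\chi(A) = |\zeta_A|$. A morphism $f : e \to e'$ in $E$ is cartesian (for $P$) if for every $g : e'' \to e'$ in $E$ and every $h : P(e'') \to P(e)$ in $B$ with $P(f)\circ h = P(g)$ there is a unique $\tilde h : e'' \to e$ with $P(\tilde h) = h$ and $f \circ \tilde h = g$. $P$ is fibered in groupoids if every morphism of $E$ is cartesian and every morphism $f : b \to P(e)$ in $B$ has a lift $\tilde f : e' \to e$ in $E$ with $P(\tilde f) = f$. Cofibered in groupoids is the dual notion (reverse all morphisms). The fiber category $P^{-1}(b)$ is the subcategory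 of $E$ with objects $e$ with $P(e) = b$ and morphisms $f$ with $P(f) = \mathrm{id}_b$. A category is connected if any two objects are joined by a finite zigzag of morphisms. *)

theory Defs
  imports Main "HOL.Rat"
begin

text \<open>A category: objects, morphisms, domain, codomain, identities and composition.
  cComp C g f is g o f, defined when cCod C f = cDom C g.\<close>

record ('o, 'a) cat =
  cObj :: "'o set"
  cArr :: "'a set"
  cDom :: "'a \<Rightarrow> 'o"
  cCod :: "'a \<Rightarrow> 'o"
  cId  :: "'o \<Rightarrow> 'a"
  cComp :: "'a \<Rightarrow> 'a \<Rightarrow> 'a"

definition category :: "('o, 'a) cat \<Rightarrow> bool" where
  "category C \<longleftrightarrow>
     (\<forall>f\<in>cArr C. cDom C f \<in> cObj C \<and> cCod C f \<in> cObj C) \<and>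
     (\<forall>x\<in>cObj C. cId C x \<in> cArr C \<and> cDom C (cId C x) = x \<and> cCod C (cId C x) = x) \<and>
     (\<forall>f\<in>cArr C. \<forall>g\<in>cArr C. cCod C f = cDom C g \<longrightarrow>
        cComp C g f \<in> cArr C \<and> cDom C (cComp C g f) = cDom C f \<and> cCod C (cComp C g f) = cCod C g) \<and>
     (\<forall>f\<in>cArr C. cComp C (cId C (cCod C f)) f = f \<and> cComp C f (cId C (cDom C f)) = f) \<and>
     (\<forall>f\<in>cArr C. \<forall>g\<in>cArr C. \<forall>h\<in>cArr C. cCod C f = cDom C g \<longrightarrow> cCod C g = cDom C h \<longrightarrow>
        cComp C h (cComp C g f) = cComp C (cComp C h g) f)"

definition finite_cat :: "('o, 'a) cat \<Rightarrow> bool" where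
  "finite_cat C \<longleftrightarrow> category C \<and> finite (cObj C) \<and> finite (cArr C)"

definition opposite :: "('o, 'a) cat \<Rightarrow> ('o, 'a) cat" where
  "opposite C = \<lparr>cObj = cObj C, cArr = cArr C, cDom = cCod C, cCod = cDom C,
                 cId = cId C, cComp = (\<lambda>g f. cComp C f g)\<rparr>"

definition is_functor :: "('o, 'a) cat \<Rightarrow> ('p, 'b) cat \<Rightarrow> ('o \<Rightarrow> 'p) \<Rightarrow> ('a \<Rightarrow> 'b) \<Rightarrow> bool" where
  "is_functor E B Po Pa \<longleftrightarrow> category E \<and> category B \<and>
     (\<forall>x\<in>cObj E. Po x \<in> cObj B) \<and>
     (\<forall>f\<in>cArr E. Pa f \<in> cArr B \<and> cDom B (Pa f) = Po (cDom E f) \<and> cCod B (Pa f) = Po (cCod E f)) \<and>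
     (\<forall>x\<in>cObj E. Pa (cId E x) = cId B (Po x)) \<and>
     (\<forall>f\<in>cArr E. \<forall>g\<in>cArr E. cCod E f = cDom E g \<longrightarrow> Pa (cComp E g f) = cComp B (Pa g) (Pa f))"

definition cartesian :: "('o, 'a) cat \<Rightarrow> ('p, 'b) cat \<Rightarrow> ('o \<Rightarrow> 'p) \<Rightarrow> ('a \<Rightarrow> 'b) \<Rightarrow> 'a \<Rightarrow> bool" where
  "cartesian E B Po Pa f \<longleftrightarrow>
     (\<forall>g\<in>cArr E. cCod E g = cCod E f \<longrightarrow>
       (\<forall>h\<in>cArr B. cDom B h = Po (cDom E g) \<longrightarrow> cCod B h = Po (cDom E f) \<longrightarrow>
          cComp B (Pa f) h = Pa g \<longrightarrow>
          (\<exists>!ht. ht \<in> cArr E \<and> cDom E ht = cDom E g \<and> cCod E ht = cDom E f \<and>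
                 Pa ht = h \<and> cComp E f ht = g)))"

definition fibered_in_groupoids :: "('o, 'a) cat \<Rightarrow> ('p, 'b) cat \<Rightarrow> ('o \<Rightarrow> 'p) \<Rightarrow> ('a \<Rightarrow> 'b) \<Rightarrow> bool" where
  "fibered_in_groupoids E B Po Pa \<longleftrightarrow>
     (\<forall>f\<in>cArr E. cartesian E B Po Pa f) \<and>
     (\<forall>e\<in>cObj E. \<forall>f\<in>cArr B. cCod B f = Po e \<longrightarrow>
        (\<exists>ft\<in>cArr E. cCod E ft = e \<and> Pa ft = f))"

definition cofibered_in_groupoids :: "('o, 'a) cat \<Rightarrow> ('p, 'b) cat \<Rightarrow> ('o \<Rightarrow> 'p) \<Rightarrow> ('a \<Rightarrow> 'b) \<Rightarrow> bool" where
  "cofibered_in_groupoids E B Po Pa \<longleftrightarrow> fibered_in_groupoids (opposite E) (opposite B) Po Pa"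

definition fiber :: "('o, 'a) cat \<Rightarrow> ('p, 'b) cat \<Rightarrow> ('o \<Rightarrow> 'p) \<Rightarrow> ('a \<Rightarrow> 'b) \<Rightarrow> 'p \<Rightarrow> ('o, 'a) cat" where
  "fiber E B Po Pa b = E\<lparr>cObj := {e\<in>cObj E. Po e = b}, cArr := {f\<in>cArr E. Pa f = cId B b}\<rparr>"

definition connected_cat :: "('o, 'a) cat \<Rightarrow> bool" where
  "connected_cat C \<longleftrightarrow>
     (let R = {(cDom C f, cCod C f) | f. f \<in> cArr C} in
      \<forall>x\<in>cObj C. \<forall>y\<in>cObj C. (x, y) \<in> (R \<union> R\<inverse>)\<^sup>*)"

definition is_weighting :: "'i set \<Rightarrow> 'j set \<Rightarrow> ('i \<Rightarrow> 'j \<Rightarrow> rat) \<Rightarrow> ('j \<Rightarrow> rat) \<Rightarrow> bool" where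
  "is_weighting I J \<zeta> k \<longleftrightarrow> (\<forall>i\<in>I. (\<Sum>j\<in>J. \<zeta> i j * k j) = 1)"

definition is_coweighting :: "'i set \<Rightarrow> 'j set \<Rightarrow> ('i \<Rightarrow> 'j \<Rightarrow> rat) \<Rightarrow> ('i \<Rightarrow> rat) \<Rightarrow> bool" where
  "is_coweighting I J \<zeta> k \<longleftrightarrow> (\<forall>j\<in>J. (\<Sum>i\<in>I. k i * \<zeta> i j) = 1)"

definition has_euler_char_mat :: "'i set \<Rightarrow> 'j set \<Rightarrow> ('i \<Rightarrow> 'j \<Rightarrow> rat) \<Rightarrow> bool" where
  "has_euler_char_mat I J \<zeta> \<longleftrightarrow> (\<exists>k. is_weighting I J \<zeta> k) \<and> (\<exists>k. is_coweighting I J \<zeta> k)"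

definition euler_char_mat :: "'i set \<Rightarrow> 'j set \<Rightarrow> ('i \<Rightarrow> 'j \<Rightarrow> rat) \<Rightarrow> rat" where
  "euler_char_mat I J \<zeta> = (\<Sum>j\<in>J. (SOME k. is_weighting I J \<zeta> k) j)"

definition sim_matrix :: "('o, 'a) cat \<Rightarrow> 'o \<Rightarrow> 'o \<Rightarrow> rat" where
  "sim_matrix C x y = of_nat (card {f\<in>cArr C. cDom C f = x \<and> cCod C f = y})"

definition has_euler_char :: "('o, 'a) cat \<Rightarrow> bool" where
  "has_euler_char C \<longleftrightarrow> has_euler_char_mat (cObj C) (cObj C) (sim_matrix C)"

definition euler_char :: "('o, 'a) cat \<Rightarrow> rat" where
  "euler_char C = euler_char_mat (cObj C) (cObj C) (sim_matrix C)"

end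

theory Submission
  imports Defs
begin

lemma cat_facts:
  assumes "category C"
  shows cat_dom: "f \<in> cArr C \<Longrightarrow> cDom C f \<in> cObj C"
    and cat_cod: "f \<in> cArr C \<Longrightarrow> cCod C f \<in> cObj C"
    and cat_id: "x \<in> cObj C \<Longrightarrow> cId C x \<in> cArr C"
    and cat_id_dom: "x \<in> cObj C \<Longrightarrow> cDom C (cId C x) = x"
    and cat_id_cod: "x \<in> cObj C \<Longrightarrow> cCod C (cId C x) = x"
    and cat_comp: "f \<in> cArr C \<Longrightarrow> g \<in> cArr C \<Longrightarrow> cCod C f = cDom C g \<Longrightarrow> cComp C g f \<in> cArr C"
    and cat_comp_dom: "f \<in> cArr C \<Longrightarrow> g \<in> cArr C \<Longrightarrow> cCod C f = cDom C g \<Longrightarrow> cDom C (cComp C g f) = cDom C f"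
    and cat_comp_cod: "f \<in> cArr C \<Longrightarrow> g \<in> cArr C \<Longrightarrow> cCod C f = cDom C g \<Longrightarrow> cCod C (cComp C g f) = cCod C g"
    and cat_idl: "f \<in> cArr C \<Longrightarrow> cComp C (cId C (cCod C f)) f = f"
    and cat_idr: "f \<in> cArr C \<Longrightarrow> cComp C f (cId C (cDom C f)) = f"
    and cat_assoc: "f \<in> cArr C \<Longrightarrow> g \<in> cArr C \<Longrightarrow> h \<in> cArr C \<Longrightarrow> cCod C f = cDom C g \<Longrightarrow> cCod C g = cDom C h \<Longrightarrow>
        cComp C h (cComp C g f) = cComp C (cComp C h g) f"
  using assms unfolding category_def by blast+

lemma category_opposite: "category C \<Longrightarrow> category (opposite C)"
  unfolding category_def opposite_def by auto

definition Hom :: "('o,'a) cat \<Rightarrow> 'o \<Rightarrow> 'o \<Rightarrow> 'a set" where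
  "Hom C x y = {f\<in>cArr C. cDom C f = x \<and> cCod C f = y}"
definition Out :: "('o,'a) cat \<Rightarrow> 'o \<Rightarrow> 'a set" where
  "Out C x = {f\<in>cArr C. cDom C f = x}"
definition groupoid :: "('o,'a) cat \<Rightarrow> bool" where
  "groupoid C \<longleftrightarrow> (\<forall>f\<in>cArr C. \<exists>g\<in>cArr C. cDom C g = cCod C f \<and> cCod C g = cDom C f \<and>
      cComp C g f = cId C (cDom C f) \<and> cComp C f g = cId C (cCod C f))"

lemma groupoid_opposite: "groupoid C \<Longrightarrow> groupoid (opposite C)"
  unfolding groupoid_def opposite_def by fastforce

lemma sim_matrix_opposite: "sim_matrix (opposite C) x y = sim_matrix C y x"
  unfolding sim_matrix_def opposite_def by (simp add: conj_commute)

lemma sim_matrix_Hom: "sim_matrix C x y = of_nat (card (Hom C x y))"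
  unfolding sim_matrix_def Hom_def by simp

lemma out_card_le:
  assumes C: "category C" "finite (cArr C)"
    and g: "g \<in> Hom C x y" and g': "g' \<in> Hom C y x" and gg: "cComp C g g' = cId C y"
  shows "card (Out C y) \<le> card (Out C x)"
proof (rule card_inj_on_le[where f="\<lambda>f. cComp C f g"])
  show "finite (Out C x)" using C by (simp add: Out_def)
  show "(\<lambda>f. cComp C f g) ` Out C y \<subseteq> Out C x"
    using g cat_comp[OF C(1)] cat_comp_dom[OF C(1)] by (auto simp: Out_def Hom_def)
  show "inj_on (\<lambda>f. cComp C f g) (Out C y)"
  proof
    fix f1 f2 assume f1: "f1 \<in> Out C y" and f2: "f2 \<in> Out C y" and eq: "cComp C f1 g = cComp C f2 g"
    have "f1 = cComp C f1 (cComp C g g')"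
      using f1 gg cat_idr[OF C(1)] by (auto simp: Out_def)
    also have "\<dots> = cComp C (cComp C f1 g) g'"
      using f1 g g' by (intro cat_assoc[OF C(1)]) (auto simp: Out_def Hom_def)
    also have "\<dots> = cComp C (cComp C f2 g) g'" using eq by simp
    also have "\<dots> = cComp C f2 (cComp C g g')"
      using f2 g g' by (intro cat_assoc[OF C(1), symmetric]) (auto simp: Out_def Hom_def)
    also have "\<dots> = f2"
      using f2 gg cat_idr[OF C(1)] by (auto simp: Out_def)
    finally show "f1 = f2" .
  qed
qed

lemma groupoid_weighting:
  assumes C: "category C" "finite (cArr C)" "finite (cObj C)" and G: "groupoid C"
  shows "is_weighting (cObj C) (cObj C) (sim_matrix C) (\<lambda>x. 1 / of_nat (card (Out C x)))"
  unfolding is_weighting_def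
proof
  fix x assume x: "x \<in> cObj C"
  have eqc: "card (Out C y) = card (Out C x)" if y: "y \<in> cObj C" and ne: "Hom C x y \<noteq> {}" for y
  proof -
    obtain g where g: "g \<in> Hom C x y" using ne by blast
    then obtain g' where g': "g' \<in> cArr C" "cDom C g' = y" "cCod C g' = x"
      "cComp C g' g = cId C x" "cComp C g g' = cId C y"
      using G unfolding groupoid_def Hom_def by fastforce
    have "card (Out C y) \<le> card (Out C x)"
      using out_card_le[OF C(1,2) g _ g'(5)] g' by (auto simp: Hom_def)
    moreover have "card (Out C x) \<le> card (Out C y)"
      using out_card_le[OF C(1,2) _ g g'(4)] g' by (auto simp: Hom_def)
    ultimately show ?thesis by simp
  qed
  have fin: "finite (Out C x)" using C by (simp add: Out_def)
  have "cId C x \<in> Out C x" using x cat_id[OF C(1)] cat_id_dom[OF C(1)] by (auto simp: Out_def)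
  hence pos: "card (Out C x) > 0" using fin card_gt_0_iff by blast
  have "(\<Sum>y\<in>cObj C. sim_matrix C x y * (1 / of_nat (card (Out C y))))
      = (\<Sum>y\<in>cObj C. of_nat (card (Hom C x y)) / of_nat (card (Out C x)))"
  proof (rule sum.cong)
    fix y assume y: "y \<in> cObj C"
    show "sim_matrix C x y * (1 / of_nat (card (Out C y))) = of_nat (card (Hom C x y)) / of_nat (card (Out C x))"
    proof (cases "Hom C x y = {}")
      case True thus ?thesis by (simp add: sim_matrix_Hom)
    next
      case False thus ?thesis using eqc[OF y False] by (simp add: sim_matrix_Hom)
    qed
  qed simp
  also have "\<dots> = of_nat (\<Sum>y\<in>cObj C. card (Hom C x y)) / of_nat (card (Out C x))"
    by (simp add: sum_divide_distrib)
  also have "(\<Sum>y\<in>cObj C. card (Hom C x y)) = card (\<Union>y\<in>cObj C. Hom C x y)"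
    by (rule card_UN_disjoint[symmetric]) (use C in \<open>auto simp: Hom_def\<close>)
  also have "(\<Union>y\<in>cObj C. Hom C x y) = Out C x"
    using cat_cod[OF C(1)] by (auto simp: Hom_def Out_def)
  finally show "(\<Sum>y\<in>cObj C. sim_matrix C x y * (1 / of_nat (card (Out C y)))) = 1"
    using pos by simp
qed

lemma weighting_transpose:
  "is_weighting I I (\<lambda>x y. \<zeta> y x) k \<Longrightarrow> is_coweighting I I \<zeta> k"
  unfolding is_weighting_def is_coweighting_def by (simp add: mult.commute)

lemma groupoid_coweighting:
  assumes C: "category C" "finite (cArr C)" "finite (cObj C)" and G: "groupoid C"
  shows "is_coweighting (cObj C) (cObj C) (sim_matrix C) (\<lambda>x. 1 / of_nat (card {f\<in>cArr C. cCod C f = x}))"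
proof -
  have "is_weighting (cObj (opposite C)) (cObj (opposite C)) (sim_matrix (opposite C))
        (\<lambda>x. 1 / of_nat (card (Out (opposite C) x)))"
    by (rule groupoid_weighting) (use C G in \<open>auto simp: category_opposite groupoid_opposite, auto simp: opposite_def\<close>)
  thus ?thesis
    unfolding sim_matrix_opposite by (intro weighting_transpose) (simp add: Out_def opposite_def)
qed

lemma weighting_cong: "is_weighting I J \<zeta> k \<Longrightarrow> (\<And>j. j \<in> J \<Longrightarrow> k j = k' j) \<Longrightarrow> is_weighting I J \<zeta> k'"
  unfolding is_weighting_def by simp
lemma coweighting_cong: "is_coweighting I J \<zeta> k \<Longrightarrow> (\<And>j. j \<in> I \<Longrightarrow> k j = k' j) \<Longrightarrow> is_coweighting I J \<zeta> k'"
  unfolding is_coweighting_def by simp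

lemma weighting_sum_eq:
  assumes "finite I" "finite J" "is_weighting I J \<zeta> k" "is_coweighting I J \<zeta> c"
  shows "(\<Sum>j\<in>J. k j) = (\<Sum>i\<in>I. c i)"
proof -
  have "(\<Sum>j\<in>J. k j) = (\<Sum>j\<in>J. (\<Sum>i\<in>I. c i * \<zeta> i j) * k j)"
    using assms(4) unfolding is_coweighting_def by simp
  also have "\<dots> = (\<Sum>i\<in>I. c i * (\<Sum>j\<in>J. \<zeta> i j * k j))"
    by (simp add: sum_distrib_left sum_distrib_right mult.assoc) (rule sum.swap)
  also have "\<dots> = (\<Sum>i\<in>I. c i)"
    using assms(3) unfolding is_weighting_def by simp
  finally show ?thesis .
qed

lemma euler_char_mat_eq:
  assumes "finite I" "finite J" "is_weighting I J \<zeta> k" "is_coweighting I J \<zeta> c"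
  shows "euler_char_mat I J \<zeta> = (\<Sum>j\<in>J. k j)"
proof -
  have "is_weighting I J \<zeta> (SOME k. is_weighting I J \<zeta> k)" using assms(3) by (metis someI)
  thus ?thesis unfolding euler_char_mat_def
    using weighting_sum_eq[OF assms(1,2) _ assms(4)] assms(3) by metis
qed


definition FO :: "('o,'a) cat \<Rightarrow> ('o \<Rightarrow> 'p) \<Rightarrow> 'p \<Rightarrow> 'o set" where
  "FO E Po b = {e\<in>cObj E. Po e = b}"
definition lifts :: "('o,'a) cat \<Rightarrow> ('a \<Rightarrow> 'b) \<Rightarrow> 'o \<Rightarrow> 'o \<Rightarrow> 'b \<Rightarrow> 'a set" where
  "lifts E Pa x y h = {g\<in>cArr E. cDom E g = x \<and> cCod E g = y \<and> Pa g = h}"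
definition wgt :: "('o,'a) cat \<Rightarrow> ('p,'b) cat \<Rightarrow> ('o \<Rightarrow> 'p) \<Rightarrow> ('a \<Rightarrow> 'b) \<Rightarrow> 'o \<Rightarrow> rat" where
  "wgt E B Po Pa x = 1 / of_nat (card {f\<in>cArr E. Pa f = cId B (Po x) \<and> cDom E f = x})"
definition cwgt :: "('o,'a) cat \<Rightarrow> ('p,'b) cat \<Rightarrow> ('o \<Rightarrow> 'p) \<Rightarrow> ('a \<Rightarrow> 'b) \<Rightarrow> 'o \<Rightarrow> rat" where
  "cwgt E B Po Pa x = 1 / of_nat (card {f\<in>cArr E. Pa f = cId B (Po x) \<and> cCod E f = x})"

lemma cwgt_opposite: "cwgt (opposite E) (opposite B) Po Pa x = wgt E B Po Pa x"
  by (simp add: opposite_def cwgt_def wgt_def)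
lemma FO_opposite: "FO (opposite E) Po b = FO E Po b"
  by (simp add: opposite_def FO_def)
lemma lifts_opposite: "lifts (opposite E) Pa x y h = lifts E Pa y x h"
  by (auto simp add: opposite_def lifts_def)

lemma fiber_simps:
  "cObj (fiber E B Po Pa b) = FO E Po b"
  "cArr (fiber E B Po Pa b) = {f\<in>cArr E. Pa f = cId B b}"
  "cDom (fiber E B Po Pa b) = cDom E" "cCod (fiber E B Po Pa b) = cCod E"
  "cId (fiber E B Po Pa b) = cId E" "cComp (fiber E B Po Pa b) = cComp E"
  by (simp_all add: fiber_def FO_def)

locale fib =
  fixes E :: "('o,'a) cat" and B :: "('p,'b) cat" and Po :: "'o \<Rightarrow> 'p" and Pa :: "'a \<Rightarrow> 'b"
  assumes fE: "finite_cat E" and fB: "finite_cat B" and fP: "is_functor E B Po Pa"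
    and fg: "fibered_in_groupoids E B Po Pa"
begin

lemma catE: "category E" and catB: "category B" and finE: "finite (cArr E)" "finite (cObj E)"
  and finB: "finite (cArr B)" "finite (cObj B)"
  using fE fB by (auto simp: finite_cat_def)

lemma Po_obj: "x \<in> cObj E \<Longrightarrow> Po x \<in> cObj B"
  and Pa_arr: "f \<in> cArr E \<Longrightarrow> Pa f \<in> cArr B"
  and Pa_dom: "f \<in> cArr E \<Longrightarrow> cDom B (Pa f) = Po (cDom E f)"
  and Pa_cod: "f \<in> cArr E \<Longrightarrow> cCod B (Pa f) = Po (cCod E f)"
  and Pa_id: "x \<in> cObj E \<Longrightarrow> Pa (cId E x) = cId B (Po x)"
  and Pa_comp: "f \<in> cArr E \<Longrightarrow> g \<in> cArr E \<Longrightarrow> cCod E f = cDom E g \<Longrightarrow> Pa (cComp E g f) = cComp B (Pa g) (Pa f)"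
  using fP unfolding is_functor_def by blast+

lemma cart: "f \<in> cArr E \<Longrightarrow> g \<in> cArr E \<Longrightarrow> cCod E g = cCod E f \<Longrightarrow> h \<in> cArr B \<Longrightarrow>
   cDom B h = Po (cDom E g) \<Longrightarrow> cCod B h = Po (cDom E f) \<Longrightarrow> cComp B (Pa f) h = Pa g \<Longrightarrow>
   \<exists>!ht. ht \<in> cArr E \<and> cDom E ht = cDom E g \<and> cCod E ht = cDom E f \<and> Pa ht = h \<and> cComp E f ht = g"
  using fg unfolding fibered_in_groupoids_def cartesian_def by blast

lemma lift_ex: "e \<in> cObj E \<Longrightarrow> f \<in> cArr B \<Longrightarrow> cCod B f = Po e \<Longrightarrow> \<exists>ft\<in>cArr E. cCod E ft = e \<and> Pa ft = f"
  using fg unfolding fibered_in_groupoids_def by blast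

lemma idid: "b \<in> cObj B \<Longrightarrow> cComp B (cId B b) (cId B b) = cId B b"
  using cat_idl[OF catB, of "cId B b"] cat_id[OF catB] cat_id_cod[OF catB] by simp

lemma fiber_arr_obj:
  assumes "f \<in> cArr E" "Pa f = cId B b" "b \<in> cObj B"
  shows "Po (cDom E f) = b" "Po (cCod E f) = b"
  using assms Pa_dom Pa_cod cat_id_dom[OF catB] cat_id_cod[OF catB] by metis+

lemma fiber_category: "b \<in> cObj B \<Longrightarrow> category (fiber E B Po Pa b)"
  unfolding category_def fiber_simps FO_def
  using catE fiber_arr_obj
  by (auto simp: cat_facts Pa_id Pa_comp idid)

lemma fiber_groupoid:
  assumes b: "b \<in> cObj B"
  shows "groupoid (fiber E B Po Pa b)"
  unfolding groupoid_def fiber_simps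
proof (intro ballI)
  fix f assume "f \<in> {f \<in> cArr E. Pa f = cId B b}"
  hence f: "f \<in> cArr E" "Pa f = cId B b" by auto
  define x where "x = cDom E f"
  define y where "y = cCod E f"
  have x: "x \<in> cObj E" "Po x = b" using f fiber_arr_obj[OF f b] cat_dom[OF catE] by (auto simp: x_def)
  have y: "y \<in> cObj E" "Po y = b" using f fiber_arr_obj[OF f b] cat_cod[OF catE] by (auto simp: y_def)
  have idb: "cId B b \<in> cArr B" "cDom B (cId B b) = b" "cCod B (cId B b) = b"
    using b by (auto simp: cat_facts[OF catB])
  have "\<exists>!ht. ht \<in> cArr E \<and> cDom E ht = cDom E (cId E y) \<and> cCod E ht = cDom E f \<and> Pa ht = cId B b
        \<and> cComp E f ht = cId E y"
    by (rule cart) (use f x y idb b in \<open>auto simp: cat_facts[OF catE] Pa_id idid y_def x_def\<close>)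
  then obtain ht where ht: "ht \<in> cArr E" "cDom E ht = y" "cCod E ht = x" "Pa ht = cId B b" "cComp E f ht = cId E y"
    using y by (auto simp: cat_facts[OF catE] x_def)
  have U: "\<exists>!ht. ht \<in> cArr E \<and> cDom E ht = cDom E f \<and> cCod E ht = cDom E f \<and> Pa ht = cId B b
        \<and> cComp E f ht = f"
    by (rule cart) (use f x y idb b in \<open>auto simp: x_def idid\<close>)
  have c1: "cId E x \<in> cArr E \<and> cDom E (cId E x) = cDom E f \<and> cCod E (cId E x) = cDom E f \<and> Pa (cId E x) = cId B b
        \<and> cComp E f (cId E x) = f"
    using x f by (auto simp: cat_facts[OF catE] Pa_id x_def)
  have "cComp E f (cComp E ht f) = cComp E (cComp E f ht) f"
    using f ht by (intro cat_assoc[OF catE]) (auto simp: x_def y_def)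
  also have "\<dots> = f" using ht f by (simp add: cat_idl[OF catE] y_def)
  finally have c2: "cComp E ht f \<in> cArr E \<and> cDom E (cComp E ht f) = cDom E f \<and> cCod E (cComp E ht f) = cDom E f
        \<and> Pa (cComp E ht f) = cId B b \<and> cComp E f (cComp E ht f) = f"
    using f ht b by (auto simp: cat_facts[OF catE] Pa_comp idid x_def y_def)
  have "cComp E ht f = cId E x" using U c1 c2 by blast
  thus "\<exists>g\<in>{f \<in> cArr E. Pa f = cId B b}. cDom E g = cCod E f \<and> cCod E g = cDom E f \<and>
          cComp E g f = cId E (cDom E f) \<and> cComp E f g = cId E (cCod E f)"
    using ht by (auto simp: x_def y_def)
qed

lemma fiber_weighting:
  assumes b: "b \<in> cObj B"
  shows "is_weighting (FO E Po b) (FO E Po b) (sim_matrix (fiber E B Po Pa b)) (wgt E B Po Pa)"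
proof -
  have "is_weighting (cObj (fiber E B Po Pa b)) (cObj (fiber E B Po Pa b)) (sim_matrix (fiber E B Po Pa b))
      (\<lambda>x. 1 / of_nat (card (Out (fiber E B Po Pa b) x)))"
    by (rule groupoid_weighting) (use fiber_category[OF b] fiber_groupoid[OF b] finE in \<open>auto simp: fiber_simps FO_def\<close>)
  then have "is_weighting (FO E Po b) (FO E Po b) (sim_matrix (fiber E B Po Pa b))
      (\<lambda>x. 1 / of_nat (card (Out (fiber E B Po Pa b) x)))" by (simp only: fiber_simps(1))
  then show ?thesis
    by (rule weighting_cong) (auto simp: Out_def fiber_simps FO_def wgt_def intro!: arg_cong[where f=card])
qed

lemma fiber_coweighting:
  assumes b: "b \<in> cObj B"
  shows "is_coweighting (FO E Po b) (FO E Po b) (sim_matrix (fiber E B Po Pa b)) (cwgt E B Po Pa)"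
proof -
  have "is_coweighting (cObj (fiber E B Po Pa b)) (cObj (fiber E B Po Pa b)) (sim_matrix (fiber E B Po Pa b))
      (\<lambda>x. 1 / of_nat (card {f\<in>cArr (fiber E B Po Pa b). cCod (fiber E B Po Pa b) f = x}))"
    by (rule groupoid_coweighting) (use fiber_category[OF b] fiber_groupoid[OF b] finE in \<open>auto simp: fiber_simps FO_def\<close>)
  then have "is_coweighting (FO E Po b) (FO E Po b) (sim_matrix (fiber E B Po Pa b))
      (\<lambda>x. 1 / of_nat (card {f\<in>cArr (fiber E B Po Pa b). cCod (fiber E B Po Pa b) f = x}))"
    by (simp only: fiber_simps(1))
  then show ?thesis
    by (rule coweighting_cong) (auto simp: fiber_simps FO_def cwgt_def intro!: arg_cong[where f=card])
qed

lemma lift_cosum: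
  assumes h: "h \<in> cArr B" and x': "x' \<in> cObj E" "Po x' = cCod B h"
  shows "(\<Sum>x\<in>FO E Po (cDom B h). cwgt E B Po Pa x * of_nat (card (lifts E Pa x x' h))) = 1"
proof -
  define b where "b = cDom B h"
  have b: "b \<in> cObj B" using h cat_dom[OF catB] by (simp add: b_def)
  obtain ft where ft: "ft \<in> cArr E" "cCod E ft = x'" "Pa ft = h" using lift_ex[OF x'(1) h x'(2)[symmetric]] by blast
  define y where "y = cDom E ft"
  have y: "y \<in> FO E Po b" using ft cat_dom[OF catE] Pa_dom by (auto simp: FO_def y_def b_def)
  have Poy: "Po (cDom E ft) = b" using y by (simp add: FO_def y_def)
  have hid: "cComp B h (cId B b) = h" using cat_idr[OF catB h] by (simp add: b_def)
  have idb: "cId B b \<in> cArr B" "cDom B (cId B b) = b" "cCod B (cId B b) = b"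
    using b by (auto simp: cat_facts[OF catB])
  have card_eq: "card (lifts E Pa x x' h) = card (Hom (fiber E B Po Pa b) x y)" if x: "x \<in> FO E Po b" for x
  proof -
    have "bij_betw (\<lambda>\<phi>. cComp E ft \<phi>) (Hom (fiber E B Po Pa b) x y) (lifts E Pa x x' h)"
    proof (rule bij_betw_imageI)
      show "inj_on (cComp E ft) (Hom (fiber E B Po Pa b) x y)"
      proof
        fix p1 p2 assume p1: "p1 \<in> Hom (fiber E B Po Pa b) x y" and p2: "p2 \<in> Hom (fiber E B Po Pa b) x y"
          and eq: "cComp E ft p1 = cComp E ft p2"
        have P1: "p1 \<in> cArr E" "Pa p1 = cId B b" "cDom E p1 = x" "cCod E p1 = y"
          using p1 by (auto simp: Hom_def fiber_simps)
        have P2: "p2 \<in> cArr E" "Pa p2 = cId B b" "cDom E p2 = x" "cCod E p2 = y"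
          using p2 by (auto simp: Hom_def fiber_simps)
        let ?g = "cComp E ft p1"
        have "\<exists>!ht. ht \<in> cArr E \<and> cDom E ht = cDom E ?g \<and> cCod E ht = cDom E ft \<and> Pa ht = cId B b \<and> cComp E ft ht = ?g"
          by (rule cart) (use ft P1 x idb hid Poy in \<open>auto simp: cat_facts[OF catE] Pa_comp y_def FO_def\<close>)
        thus "p1 = p2" using P1 P2 eq ft by (auto simp: cat_facts[OF catE] y_def)
      qed
      show "cComp E ft ` Hom (fiber E B Po Pa b) x y = lifts E Pa x x' h"
      proof
        show "cComp E ft ` Hom (fiber E B Po Pa b) x y \<subseteq> lifts E Pa x x' h"
          using ft hid by (auto simp: Hom_def fiber_simps lifts_def cat_facts[OF catE] Pa_comp y_def)
        show "lifts E Pa x x' h \<subseteq> cComp E ft ` Hom (fiber E B Po Pa b) x y"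
        proof
          fix g assume "g \<in> lifts E Pa x x' h"
          hence g: "g \<in> cArr E" "cDom E g = x" "cCod E g = x'" "Pa g = h" by (auto simp: lifts_def)
          have "\<exists>!ht. ht \<in> cArr E \<and> cDom E ht = cDom E g \<and> cCod E ht = cDom E ft \<and> Pa ht = cId B b \<and> cComp E ft ht = g"
            by (rule cart) (use ft g x y idb hid in \<open>auto simp: FO_def y_def\<close>)
          then obtain ht where "ht \<in> cArr E" "cDom E ht = x" "cCod E ht = y" "Pa ht = cId B b" "cComp E ft ht = g"
            using g by (auto simp: y_def)
          thus "g \<in> cComp E ft ` Hom (fiber E B Po Pa b) x y"
            by (auto simp: Hom_def fiber_simps)
        qed
      qed
    qed
    thus ?thesis by (rule bij_betw_same_card[symmetric])
  qed
  have "(\<Sum>x\<in>FO E Po b. cwgt E B Po Pa x * of_nat (card (lifts E Pa x x' h)))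
      = (\<Sum>x\<in>FO E Po b. cwgt E B Po Pa x * sim_matrix (fiber E B Po Pa b) x y)"
    by (rule sum.cong) (auto simp: card_eq sim_matrix_Hom)
  also have "\<dots> = 1" using fiber_coweighting[OF b] y unfolding is_coweighting_def by blast
  finally show ?thesis by (simp add: b_def)
qed

end

lemma opposite_opposite[simp]: "opposite (opposite C) = C"
  by (simp add: opposite_def)

lemma functor_opposite: "is_functor E B Po Pa \<Longrightarrow> is_functor (opposite E) (opposite B) Po Pa"
  unfolding is_functor_def by (auto simp: category_opposite) (auto simp: opposite_def)

lemma finite_cat_opposite: "finite_cat C \<Longrightarrow> finite_cat (opposite C)"
  unfolding finite_cat_def by (auto simp: category_opposite) (auto simp: opposite_def)


lemma opp_simps[simp]: "cObj (opposite C) = cObj C" "cArr (opposite C) = cArr C"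
  "cDom (opposite C) = cCod C" "cCod (opposite C) = cDom C"
  by (simp_all add: opposite_def)

locale bifib = fib +
  assumes cofib: "cofibered_in_groupoids E B Po Pa"
begin

sublocale G: fib "opposite E" "opposite B" Po Pa
  using fE fB fP cofib
  by unfold_locales (auto simp: finite_cat_opposite functor_opposite cofibered_in_groupoids_def)

lemma lift_sum:
  assumes h: "h \<in> cArr B" and x: "x \<in> cObj E" "Po x = cDom B h"
  shows "(\<Sum>x'\<in>FO E Po (cCod B h). wgt E B Po Pa x' * of_nat (card (lifts E Pa x x' h))) = 1"
  using G.lift_cosum[of h x] h x by (simp add: cwgt_opposite FO_opposite lifts_opposite)

definition chi where "chi b = (\<Sum>x\<in>FO E Po b. wgt E B Po Pa x)"

lemma finFO: "finite (FO E Po b)" using finE by (simp add: FO_def)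

lemma chi_cw: "b \<in> cObj B \<Longrightarrow> chi b = (\<Sum>x\<in>FO E Po b. cwgt E B Po Pa x)"
  unfolding chi_def by (rule weighting_sum_eq[OF finFO finFO fiber_weighting fiber_coweighting])

lemma chi_arr:
  assumes h: "h \<in> cArr B"
  shows "chi (cDom B h) = chi (cCod B h)"
proof -
  have d: "cDom B h \<in> cObj B" and c: "cCod B h \<in> cObj B" using h cat_facts[OF catB] by auto
  have "chi (cDom B h) = (\<Sum>x\<in>FO E Po (cDom B h). cwgt E B Po Pa x)" by (rule chi_cw[OF d])
  also have "\<dots> = (\<Sum>x\<in>FO E Po (cDom B h). cwgt E B Po Pa x *
       (\<Sum>x'\<in>FO E Po (cCod B h). wgt E B Po Pa x' * of_nat (card (lifts E Pa x x' h))))"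
  proof (rule sum.cong[OF refl])
    fix x assume "x \<in> FO E Po (cDom B h)"
    hence "x \<in> cObj E" "Po x = cDom B h" by (auto simp: FO_def)
    from lift_sum[OF h this] show "cwgt E B Po Pa x = cwgt E B Po Pa x *
       (\<Sum>x'\<in>FO E Po (cCod B h). wgt E B Po Pa x' * of_nat (card (lifts E Pa x x' h)))" by simp
  qed
  also have "\<dots> = (\<Sum>x'\<in>FO E Po (cCod B h). wgt E B Po Pa x' *
       (\<Sum>x\<in>FO E Po (cDom B h). cwgt E B Po Pa x * of_nat (card (lifts E Pa x x' h))))"
    by (simp add: sum_distrib_left mult_ac) (rule sum.swap)
  also have "\<dots> = (\<Sum>x'\<in>FO E Po (cCod B h). wgt E B Po Pa x')"
  proof (rule sum.cong[OF refl])
    fix x' assume "x' \<in> FO E Po (cCod B h)"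
    hence "x' \<in> cObj E" "Po x' = cCod B h" by (auto simp: FO_def)
    from lift_cosum[OF h this] show "wgt E B Po Pa x' *
       (\<Sum>x\<in>FO E Po (cDom B h). cwgt E B Po Pa x * of_nat (card (lifts E Pa x x' h))) = wgt E B Po Pa x'" by simp
  qed
  finally show ?thesis by (simp add: chi_def)
qed

lemma chi_const:
  assumes conn: "connected_cat B" and b0: "b0 \<in> cObj B" and b: "b \<in> cObj B"
  shows "chi b = chi b0"
proof -
  let ?R = "{(cDom B f, cCod B f) | f. f \<in> cArr B}"
  have "(b0, b) \<in> (?R \<union> ?R\<inverse>)\<^sup>*" using conn b0 b unfolding connected_cat_def Let_def by blast
  hence "chi b0 = chi b"
  proof (induction rule: rtrancl_induct)
    case base thus ?case by simp
  next
    case (step y z)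
    from step(2) have "chi y = chi z" using chi_arr by auto
    thus ?case using step(3) by simp
  qed
  thus ?thesis by simp
qed

lemma Hom_E_card:
  assumes e: "e \<in> cObj E" and e': "e' \<in> cObj E"
  shows "card (Hom E e e') = (\<Sum>h\<in>Hom B (Po e) (Po e'). card (lifts E Pa e e' h))"
proof -
  have "Hom E e e' = (\<Union>h\<in>Hom B (Po e) (Po e'). lifts E Pa e e' h)"
    by (auto simp: Hom_def lifts_def Pa_arr Pa_dom Pa_cod)
  moreover have "card (\<Union>h\<in>Hom B (Po e) (Po e'). lifts E Pa e e' h) = (\<Sum>h\<in>Hom B (Po e) (Po e'). card (lifts E Pa e e' h))"
    by (rule card_UN_disjoint) (use finB finE in \<open>auto simp: Hom_def lifts_def\<close>)
  ultimately show ?thesis by simp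
qed

lemma sum_FO:
  fixes G :: "_ \<Rightarrow> rat"
  shows "(\<Sum>e\<in>cObj E. G e) = (\<Sum>b\<in>cObj B. \<Sum>e\<in>FO E Po b. G e)"
  unfolding FO_def by (rule sum.group[symmetric]) (use finE finB Po_obj in auto)

lemma E_weighting:
  assumes kB: "is_weighting (cObj B) (cObj B) (sim_matrix B) kB"
  shows "is_weighting (cObj E) (cObj E) (sim_matrix E) (\<lambda>e. kB (Po e) * wgt E B Po Pa e)"
  unfolding is_weighting_def
proof
  fix e assume e: "e \<in> cObj E"
  have inner: "(\<Sum>e'\<in>FO E Po b'. sim_matrix E e e' * (kB (Po e') * wgt E B Po Pa e'))
      = sim_matrix B (Po e) b' * kB b'" if b': "b' \<in> cObj B" for b'
  proof -
    have "(\<Sum>e'\<in>FO E Po b'. sim_matrix E e e' * (kB (Po e') * wgt E B Po Pa e'))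
       = (\<Sum>e'\<in>FO E Po b'. kB b' * (\<Sum>h\<in>Hom B (Po e) b'. wgt E B Po Pa e' * of_nat (card (lifts E Pa e e' h))))"
      by (rule sum.cong) (auto simp: FO_def sim_matrix_Hom Hom_E_card[OF e] sum_distrib_left mult_ac)
    also have "\<dots> = kB b' * (\<Sum>h\<in>Hom B (Po e) b'. \<Sum>e'\<in>FO E Po b'. wgt E B Po Pa e' * of_nat (card (lifts E Pa e e' h)))"
      unfolding sum_distrib_left by (rule sum.swap)
    also have "\<dots> = kB b' * (\<Sum>h\<in>Hom B (Po e) b'. 1)"
      using lift_sum e by (intro arg_cong[where f="\<lambda>t. kB b' * t"] sum.cong) (auto simp: Hom_def)
    finally show ?thesis by (simp add: sim_matrix_Hom)
  qed
  have "(\<Sum>e'\<in>cObj E. sim_matrix E e e' * (kB (Po e') * wgt E B Po Pa e'))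
      = (\<Sum>b'\<in>cObj B. \<Sum>e'\<in>FO E Po b'. sim_matrix E e e' * (kB (Po e') * wgt E B Po Pa e'))"
    by (rule sum_FO)
  also have "\<dots> = (\<Sum>b'\<in>cObj B. sim_matrix B (Po e) b' * kB b')"
    by (rule sum.cong) (auto simp: inner)
  also have "\<dots> = 1" using kB e Po_obj unfolding is_weighting_def by blast
  finally show "(\<Sum>e'\<in>cObj E. sim_matrix E e e' * (kB (Po e') * wgt E B Po Pa e')) = 1" .
qed

lemma E_sum:
  "(\<Sum>e\<in>cObj E. kB (Po e) * wgt E B Po Pa e) = (\<Sum>b\<in>cObj B. kB b * chi b)"
  unfolding sum_FO chi_def
  by (rule sum.cong) (auto simp: FO_def sum_distrib_left)

end

theorem theorem2p9:
  fixes E :: "('o, 'a) cat" and B :: "('p, 'b) cat"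
    and Po :: "'o \<Rightarrow> 'p" and Pa :: "'a \<Rightarrow> 'b" and b :: 'p
  assumes "finite_cat E" and "finite_cat B"
    and "is_functor E B Po Pa"
    and "fibered_in_groupoids E B Po Pa"
    and "cofibered_in_groupoids E B Po Pa"
    and "connected_cat B"
    and "b \<in> cObj B"
    and "has_euler_char E" and "has_euler_char B"
  shows "has_euler_char (fiber E B Po Pa b) \<and>
         euler_char E = euler_char B * euler_char (fiber E B Po Pa b)"
proof -
  interpret bifib E B Po Pa using assms(1-5) by unfold_locales
  define kB where "kB = (SOME k. is_weighting (cObj B) (cObj B) (sim_matrix B) k)"
  have kB: "is_weighting (cObj B) (cObj B) (sim_matrix B) kB"
    using assms(9) unfolding has_euler_char_def has_euler_char_mat_def kB_def by (metis someI)
  have eB: "euler_char B = (\<Sum>b\<in>cObj B. kB b)"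
    by (simp add: euler_char_def euler_char_mat_def kB_def)
  obtain cE where cE: "is_coweighting (cObj E) (cObj E) (sim_matrix E) cE"
    using assms(8) unfolding has_euler_char_def has_euler_char_mat_def by blast
  have "euler_char E = (\<Sum>e\<in>cObj E. kB (Po e) * wgt E B Po Pa e)"
    unfolding euler_char_def by (rule euler_char_mat_eq[OF finE(2) finE(2) E_weighting[OF kB] cE])
  also have "\<dots> = (\<Sum>b'\<in>cObj B. kB b' * chi b')" by (rule E_sum)
  also have "\<dots> = (\<Sum>b'\<in>cObj B. kB b' * chi b)"
    using chi_const[OF assms(6) assms(7)] by (intro sum.cong) auto
  also have "\<dots> = euler_char B * chi b" by (simp add: eB sum_distrib_right)
  finally have eE: "euler_char E = euler_char B * chi b" .
  have fw: "is_weighting (cObj (fiber E B Po Pa b)) (cObj (fiber E B Po Pa b))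
      (sim_matrix (fiber E B Po Pa b)) (wgt E B Po Pa)"
    unfolding fiber_simps(1) by (rule fiber_weighting[OF assms(7)])
  have fcw: "is_coweighting (cObj (fiber E B Po Pa b)) (cObj (fiber E B Po Pa b))
      (sim_matrix (fiber E B Po Pa b)) (cwgt E B Po Pa)"
    unfolding fiber_simps(1) by (rule fiber_coweighting[OF assms(7)])
  have hF: "has_euler_char (fiber E B Po Pa b)"
    unfolding has_euler_char_def has_euler_char_mat_def using fw fcw by blast
  have "euler_char (fiber E B Po Pa b) = (\<Sum>x\<in>cObj (fiber E B Po Pa b). wgt E B Po Pa x)"
    unfolding euler_char_def by (rule euler_char_mat_eq[OF _ _ fw fcw]) (simp_all add: fiber_simps finFO)
  also have "\<dots> = chi b" by (simp add: chi_def fiber_simps)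
  finally show ?thesis using hF eE by simp
qed

end
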